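(* Assume the setting described in the context and let $\mathscr K\subseteq\mathbb R^{\mathfrak d}$ be compact. Then there exists $\mathscr L\in\mathbb R$ such that for all $\theta,\vartheta\in\mathscr K$ it holds that $$|\mathcal L_\infty(\theta)-\mathcal L_\infty(\vartheta)|+\sup_{x\in[a,b]^{\ell_0}}\|\mathcal N^{L,\theta}_\infty(x)-\mathcal N^{L,\vartheta}_\infty(x)\|\le\mathscr L\|\theta-\vartheta\|.$$
   Context: Setting. Let $L,\mathfrak d\in\mathbb N=\{1,2,\dots\}$, $(\ell_k)_{k\in\mathbb N_0}\subseteq\mathbb N$, $a\in\mathbb R$, $b\in(a,\infty)$ with $\mathfrak d=\sum_{k=1}^L\ell_k(\ell_{k-1}+1)$; let $\mathbf d_k=\sum_{h=1}^k\ell_h(\ell_{h-1}+1)$ for $k\in\mathbb N_0$. For $\theta=(\theta_1,\dots,\theta_{\mathfrak d})\in\mathbb R^{\mathfrak d}$, $k\in\{1,\dots,L\}$, $i\in\{1,\dots,\ell_k\}$, $j\in\{1,\dots,\ell_{k-1}\}$ let $\mathfrak w^{k,\theta}_{i,j}=\theta_{(i-1)\ell_{k-1}+j+\mathbf d_{k-1}}$ and $\mathfrak b^{k,\theta}_i=\theta_{\ell_k\ell_{k-1}+i+\mathbf d_{k-1}}$, let $\mathfrak w^{k,\theta}=(\mathfrak w^{k,\theta}_{i,j})_{i,j}\in\mathbb R^{\ell_k\times\ell_{k-1}}$, $\mathfrak b^{k,\theta}=(\mathfrak b^{k,\theta}_1,\dots,\mathfrak b^{k,\theta}_{\ell_k})\in\mathbb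 R^{\ell_k}$, and $\mathcal A^\theta_k(x)=\mathfrak b^{k,\theta}+\mathfrak w^{k,\theta}x$. Let $\mathfrak M_\infty(x_1,\dots,x_n)=(\max\{x_1,0\},\dots,\max\{x_n,0\})$ and $\|\cdot\|$ the Euclidean norm. Define $\mathcal N^{k,\theta}_\infty\colon\mathbb R^{\ell_0}\to\mathbb R^{\ell_k}$, $k\in\{1,\dots,L\}$, by $\mathcal N^{1,\theta}_\infty=\mathcal A^\theta_1$ and $\mathcal N^{k+1,\theta}_\infty(x)=\mathcal A^\theta_{k+1}(\mathfrak M_\infty(\mathcal N^{k,\theta}_\infty(x)))$. Let $\mu$ be a measure on the Borel $\sigma$-algebra of $[a,b]^{\ell_0}$ with $\mu([a,b]^{\ell_0})\in\mathbb R$, let $f\colon[a,b]^{\ell_0}\to\mathbb R^{\ell_L}$ be measurable, and let $\mathcal L_\infty\colon\mathbb R^{\mathfrak d}\to\mathbb R$, $\mathcal L_\infty(\theta)=\int_{[a,b]^{\ell_0}}\|\mathcal N^{L,\theta}_\infty(x)-f(x)\|^2\,\mu(dx)$ (these integrals are real numbers as part of the setting). *)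

theory Defs
  imports "HOL-Analysis.Analysis"
begin

text \<open>Vectors in R^n are represented as functions nat => real, of which only
  the coordinates 1..n matter. Layer widths are ell :: nat => nat.\<close>

definition dd :: "(nat \<Rightarrow> nat) \<Rightarrow> nat \<Rightarrow> nat" where
  "dd ell k = (\<Sum>h = 1..k. ell h * (ell (h - 1) + 1))"

definition wgt :: "(nat \<Rightarrow> nat) \<Rightarrow> (nat \<Rightarrow> real) \<Rightarrow> nat \<Rightarrow> nat \<Rightarrow> nat \<Rightarrow> real" where
  "wgt ell \<theta> k i j = \<theta> ((i - 1) * ell (k - 1) + j + dd ell (k - 1))"

definition bias :: "(nat \<Rightarrow> nat) \<Rightarrow> (nat \<Rightarrow> real) \<Rightarrow> nat \<Rightarrow> nat \<Rightarrow> real" where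
  "bias ell \<theta> k i = \<theta> (ell k * ell (k - 1) + i + dd ell (k - 1))"

definition affine :: "(nat \<Rightarrow> nat) \<Rightarrow> (nat \<Rightarrow> real) \<Rightarrow> nat \<Rightarrow> (nat \<Rightarrow> real) \<Rightarrow> (nat \<Rightarrow> real)" where
  "affine ell \<theta> k x = (\<lambda>i. if i \<in> {1..ell k}
      then bias ell \<theta> k i + (\<Sum>j = 1..ell (k - 1). wgt ell \<theta> k i j * x j) else 0)"

definition relu :: "(nat \<Rightarrow> real) \<Rightarrow> (nat \<Rightarrow> real)" where
  "relu x = (\<lambda>i. max (x i) 0)"

text \<open>Realization N^{k,theta}: N 1 = A_1, N (k+1) = A_{k+1} o relu o N k.
  (The value for k = 0 is an irrelevant convention.)\<close>
primrec realiz :: "(nat \<Rightarrow> nat) \<Rightarrow> nat \<Rightarrow> (nat \<Rightarrow> real) \<Rightarrow> (nat \<Rightarrow> real) \<Rightarrow> (nat \<Rightarrow> real)" where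
  "realiz ell 0 \<theta> x = x"
| "realiz ell (Suc k) \<theta> x =
     (if k = 0 then affine ell \<theta> 1 x else affine ell \<theta> (Suc k) (relu (realiz ell k \<theta> x)))"

definition vnorm :: "nat \<Rightarrow> (nat \<Rightarrow> real) \<Rightarrow> real" where
  "vnorm n v = sqrt (\<Sum>i = 1..n. (v i)\<^sup>2)"

definition cube :: "nat \<Rightarrow> real \<Rightarrow> real \<Rightarrow> (nat \<Rightarrow> real) set" where
  "cube n a b = PiE {1..n} (\<lambda>_. {a..b})"

definition params :: "nat \<Rightarrow> (nat \<Rightarrow> real) set" where
  "params d = {\<theta>. \<forall>i. i \<notin> {1..d} \<longrightarrow> \<theta> i = 0}"

definition loss :: "(nat \<Rightarrow> nat) \<Rightarrow> nat \<Rightarrow> (nat \<Rightarrow> real) measure \<Rightarrow> ((nat \<Rightarrow> real) \<Rightarrow> (nat \<Rightarrow> real))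
    \<Rightarrow> (nat \<Rightarrow> real) \<Rightarrow> real" where
  "loss ell L M f \<theta> = (\<integral>x. (vnorm (ell L) (\<lambda>i. realiz ell L \<theta> x i - f x i))\<^sup>2 \<partial>M)"

end

theory Submission
  imports Defs
begin

lemma vnorm_L2: "vnorm n v = L2_set v {1..n}"
  unfolding vnorm_def L2_set_def by simp

lemma vnorm_nonneg: "vnorm n v \<ge> 0"
  unfolding vnorm_def by (simp add: sum_nonneg)

lemma coord_le_vnorm:
  assumes "\<theta> \<in> params d" "\<theta>' \<in> params d"
  shows "\<bar>\<theta> m - \<theta>' m\<bar> \<le> vnorm d (\<lambda>i. \<theta> i - \<theta>' i)"
proof (cases "m \<in> {1..d}")
  case True
  have "\<bar>\<theta> m - \<theta>' m\<bar> \<le> L2_set (\<lambda>i. \<bar>\<theta> i - \<theta>' i\<bar>) {1..d}"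
    by (rule member_le_L2_set) (use True in auto)
  also have "\<dots> = vnorm d (\<lambda>i. \<theta> i - \<theta>' i)" by (simp add: vnorm_L2 L2_set_def)
  finally show ?thesis .
next
  case False
  then show ?thesis using assms by (simp add: params_def vnorm_nonneg)
qed

lemma vnorm_le_sum: "vnorm n v \<le> (\<Sum>i=1..n. \<bar>v i\<bar>)"
  unfolding vnorm_L2 by (rule L2_set_le_sum_abs)

lemma vnorm_le_const:
  assumes "\<And>i. i \<in> {1..n} \<Longrightarrow> \<bar>v i\<bar> \<le> e"
  shows "vnorm n v \<le> real n * e"
proof -
  have "vnorm n v \<le> (\<Sum>i=1..n. \<bar>v i\<bar>)" by (rule vnorm_le_sum)
  also have "\<dots> \<le> (\<Sum>i=1..n. e)" by (rule sum_mono) (use assms in auto)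
  finally show ?thesis by simp
qed

lemma vnorm_triangle: "vnorm n (\<lambda>i. u i + w i) \<le> vnorm n u + vnorm n w"
  unfolding vnorm_L2 by (rule L2_set_triangle_ineq)

lemma vnorm_rev_triangle: "\<bar>vnorm n u - vnorm n w\<bar> \<le> vnorm n (\<lambda>i. u i - w i)"
proof -
  have 1: "vnorm n u \<le> vnorm n w + vnorm n (\<lambda>i. u i - w i)"
    using vnorm_triangle[of n w "\<lambda>i. u i - w i"] by simp
  have "vnorm n w \<le> vnorm n u + vnorm n (\<lambda>i. w i - u i)"
    using vnorm_triangle[of n u "\<lambda>i. w i - u i"] by simp
  moreover have "vnorm n (\<lambda>i. w i - u i) = vnorm n (\<lambda>i. u i - w i)"
    unfolding vnorm_def by (simp add: power2_commute)
  ultimately show ?thesis using 1 by linarith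
qed

lemma affine_bound:
  assumes R: "\<And>m. \<bar>\<theta> m\<bar> \<le> R" and U: "\<And>j. j \<in> {1..ell (k-1)} \<Longrightarrow> \<bar>u j\<bar> \<le> U"
    and "R \<ge> 0" "U \<ge> 0"
  shows "\<bar>affine ell \<theta> k u i\<bar> \<le> R + real (ell (k-1)) * (R * U)"
proof (cases "i \<in> {1..ell k}")
  case True
  have "\<bar>bias ell \<theta> k i + (\<Sum>j = 1..ell (k - 1). wgt ell \<theta> k i j * u j)\<bar>
      \<le> \<bar>bias ell \<theta> k i\<bar> + (\<Sum>j = 1..ell (k - 1). \<bar>wgt ell \<theta> k i j * u j\<bar>)"
    by (rule order_trans[OF abs_triangle_ineq add_left_mono[OF sum_abs]])
  also have "\<dots> \<le> R + (\<Sum>j = 1..ell (k - 1). R * U)"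
    apply (rule add_mono)
     apply (simp add: bias_def R)
    apply (rule sum_mono)
    apply (simp add: abs_mult wgt_def)
    apply (rule mult_mono)
    using R U assms by auto
  finally show ?thesis using True by (simp add: affine_def)
next
  case False
  then have "affine ell \<theta> k u i = 0" unfolding affine_def by meson
  then show ?thesis using assms by simp
qed

lemma affine_diff:
  assumes R: "\<And>m. \<bar>\<theta>' m\<bar> \<le> R" and D: "\<And>m. \<bar>\<theta> m - \<theta>' m\<bar> \<le> \<delta>"
    and U: "\<And>j. j \<in> {1..ell (k-1)} \<Longrightarrow> \<bar>u j\<bar> \<le> U"
    and E: "\<And>j. j \<in> {1..ell (k-1)} \<Longrightarrow> \<bar>u j - u' j\<bar> \<le> c * \<delta>"
    and "R \<ge> 0" "U \<ge> 0" "c \<ge> 0"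
  shows "\<bar>affine ell \<theta> k u i - affine ell \<theta>' k u' i\<bar> \<le> (1 + real (ell (k-1)) * (U + R * c)) * \<delta>"
proof (cases "i \<in> {1..ell k}")
  case True
  have dpos: "\<delta> \<ge> 0" using D[of 0] by linarith
  have eq: "affine ell \<theta> k u i - affine ell \<theta>' k u' i =
     (bias ell \<theta> k i - bias ell \<theta>' k i) + (\<Sum>j = 1..ell (k - 1).
        (wgt ell \<theta> k i j - wgt ell \<theta>' k i j) * u j + wgt ell \<theta>' k i j * (u j - u' j))"
    using True by (simp add: affine_def sum_subtractf[symmetric] algebra_simps)
  have "\<bar>(bias ell \<theta> k i - bias ell \<theta>' k i) + (\<Sum>j = 1..ell (k - 1).
        (wgt ell \<theta> k i j - wgt ell \<theta>' k i j) * u j + wgt ell \<theta>' k i j * (u j - u' j))\<bar>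
      \<le> \<bar>bias ell \<theta> k i - bias ell \<theta>' k i\<bar> + (\<Sum>j = 1..ell (k - 1).
        \<bar>(wgt ell \<theta> k i j - wgt ell \<theta>' k i j) * u j + wgt ell \<theta>' k i j * (u j - u' j)\<bar>)"
    by (rule order_trans[OF abs_triangle_ineq add_left_mono[OF sum_abs]])
  also have "\<dots> \<le> \<delta> + (\<Sum>j = 1..ell (k - 1). \<delta> * U + R * (c * \<delta>))"
  proof (rule add_mono)
    show "\<bar>bias ell \<theta> k i - bias ell \<theta>' k i\<bar> \<le> \<delta>" by (simp add: bias_def D)
    show "(\<Sum>j = 1..ell (k - 1).
        \<bar>(wgt ell \<theta> k i j - wgt ell \<theta>' k i j) * u j + wgt ell \<theta>' k i j * (u j - u' j)\<bar>)
       \<le> (\<Sum>j = 1..ell (k - 1). \<delta> * U + R * (c * \<delta>))"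
    proof (rule sum_mono)
      fix j assume j: "j \<in> {1..ell (k-1)}"
      have "\<bar>(wgt ell \<theta> k i j - wgt ell \<theta>' k i j) * u j\<bar> \<le> \<delta> * U"
        unfolding abs_mult wgt_def by (rule mult_mono) (use D U j dpos in auto)
      moreover have "\<bar>wgt ell \<theta>' k i j * (u j - u' j)\<bar> \<le> R * (c * \<delta>)"
        unfolding abs_mult wgt_def by (rule mult_mono) (use R E j assms in auto)
      ultimately show "\<bar>(wgt ell \<theta> k i j - wgt ell \<theta>' k i j) * u j + wgt ell \<theta>' k i j * (u j - u' j)\<bar>
          \<le> \<delta> * U + R * (c * \<delta>)" by (meson abs_triangle_ineq add_mono order_trans)
    qed
  qed
  also have "\<dots> = (1 + real (ell (k-1)) * (U + R * c)) * \<delta>" by (simp add: algebra_simps)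
  finally show ?thesis using eq by simp
next
  case False
  have dpos: "\<delta> \<ge> 0" using D[of 0] by linarith
  from False have "affine ell \<theta> k u i = 0" "affine ell \<theta>' k u' i = 0" unfolding affine_def by meson+
  then show ?thesis using assms dpos by simp
qed

lemma relu_abs: "\<bar>relu v j\<bar> \<le> \<bar>v j\<bar>"
  unfolding relu_def by simp

lemma relu_diff: "\<bar>relu v j - relu w j\<bar> \<le> \<bar>v j - w j\<bar>"
  unfolding relu_def by (simp add: max_def abs_if)

lemma realiz_lip:
  assumes K: "K \<subseteq> params d" and R: "\<And>\<theta> m. \<theta> \<in> K \<Longrightarrow> \<bar>\<theta> m\<bar> \<le> R" and R0: "R \<ge> 0"
    and B: "B \<ge> 0" and k: "k \<ge> 1"
  shows "\<exists>U c. U \<ge> 0 \<and> c \<ge> 0 \<and> (\<forall>\<theta>\<in>K. \<forall>\<theta>'\<in>K. \<forall>x. (\<forall>j\<in>{1..ell 0}. \<bar>x j\<bar> \<le> B) \<longrightarrow>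
     (\<forall>i. \<bar>realiz ell k \<theta> x i\<bar> \<le> U \<and>
        \<bar>realiz ell k \<theta> x i - realiz ell k \<theta>' x i\<bar> \<le> c * vnorm d (\<lambda>i. \<theta> i - \<theta>' i)))"
  using k
proof (induction k)
  case 0 then show ?case by simp
next
  case (Suc k)
  show ?case
  proof (cases "k = 0")
    case True
    have "\<forall>\<theta>\<in>K. \<forall>\<theta>'\<in>K. \<forall>x. (\<forall>j\<in>{1..ell 0}. \<bar>x j\<bar> \<le> B) \<longrightarrow>
     (\<forall>i. \<bar>realiz ell (Suc k) \<theta> x i\<bar> \<le> R + real (ell 0) * (R * B) \<and>
        \<bar>realiz ell (Suc k) \<theta> x i - realiz ell (Suc k) \<theta>' x i\<bar>
          \<le> (1 + real (ell 0) * (B + R * 0)) * vnorm d (\<lambda>i. \<theta> i - \<theta>' i))"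
    proof (intro ballI allI impI conjI)
      fix \<theta> \<theta>' x i assume th: "\<theta> \<in> K" "\<theta>' \<in> K" and x: "\<forall>j\<in>{1..ell 0}. \<bar>x j\<bar> \<le> B"
      have D: "\<And>m. \<bar>\<theta> m - \<theta>' m\<bar> \<le> vnorm d (\<lambda>i. \<theta> i - \<theta>' i)"
        using coord_le_vnorm th K by blast
      show "\<bar>realiz ell (Suc k) \<theta> x i\<bar> \<le> R + real (ell 0) * (R * B)"
        using affine_bound[of \<theta> R ell 1 x B i] True R th x R0 B by simp
      show "\<bar>realiz ell (Suc k) \<theta> x i - realiz ell (Suc k) \<theta>' x i\<bar>
          \<le> (1 + real (ell 0) * (B + R * 0)) * vnorm d (\<lambda>i. \<theta> i - \<theta>' i)"
        using affine_diff[of \<theta>' R \<theta> "vnorm d (\<lambda>i. \<theta> i - \<theta>' i)" ell 1 x B x 0 i] True R th x R0 B D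
        by simp
    qed
    moreover have "R + real (ell 0) * (R * B) \<ge> 0" "1 + real (ell 0) * (B + R * 0) \<ge> 0"
      using R0 B by simp_all
    ultimately show ?thesis by blast
  next
    case False
    then obtain U c where U: "U \<ge> 0" "c \<ge> 0" and IH: "\<forall>\<theta>\<in>K. \<forall>\<theta>'\<in>K. \<forall>x. (\<forall>j\<in>{1..ell 0}. \<bar>x j\<bar> \<le> B) \<longrightarrow>
     (\<forall>i. \<bar>realiz ell k \<theta> x i\<bar> \<le> U \<and>
        \<bar>realiz ell k \<theta> x i - realiz ell k \<theta>' x i\<bar> \<le> c * vnorm d (\<lambda>i. \<theta> i - \<theta>' i))"
      using Suc by auto
    have "\<forall>\<theta>\<in>K. \<forall>\<theta>'\<in>K. \<forall>x. (\<forall>j\<in>{1..ell 0}. \<bar>x j\<bar> \<le> B) \<longrightarrow>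
     (\<forall>i. \<bar>realiz ell (Suc k) \<theta> x i\<bar> \<le> R + real (ell k) * (R * U) \<and>
        \<bar>realiz ell (Suc k) \<theta> x i - realiz ell (Suc k) \<theta>' x i\<bar>
          \<le> (1 + real (ell k) * (U + R * c)) * vnorm d (\<lambda>i. \<theta> i - \<theta>' i))"
    proof (intro ballI allI impI conjI)
      fix \<theta> \<theta>' x i assume th: "\<theta> \<in> K" "\<theta>' \<in> K" and x: "\<forall>j\<in>{1..ell 0}. \<bar>x j\<bar> \<le> B"
      have D: "\<And>m. \<bar>\<theta> m - \<theta>' m\<bar> \<le> vnorm d (\<lambda>i. \<theta> i - \<theta>' i)"
        using coord_le_vnorm th K by blast
      have Uj: "\<And>j. \<bar>relu (realiz ell k \<theta> x) j\<bar> \<le> U"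
        using IH th x relu_abs order_trans by blast
      have Ej: "\<And>j. \<bar>relu (realiz ell k \<theta> x) j - relu (realiz ell k \<theta>' x) j\<bar> \<le> c * vnorm d (\<lambda>i. \<theta> i - \<theta>' i)"
        using IH th x relu_diff order_trans by blast
      show "\<bar>realiz ell (Suc k) \<theta> x i\<bar> \<le> R + real (ell k) * (R * U)"
        using affine_bound[of \<theta> R ell "Suc k" "relu (realiz ell k \<theta> x)" U i] False R th R0 U Uj by simp
      show "\<bar>realiz ell (Suc k) \<theta> x i - realiz ell (Suc k) \<theta>' x i\<bar>
          \<le> (1 + real (ell k) * (U + R * c)) * vnorm d (\<lambda>i. \<theta> i - \<theta>' i)"
        using affine_diff[of \<theta>' R \<theta> "vnorm d (\<lambda>i. \<theta> i - \<theta>' i)" ell "Suc k"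
            "relu (realiz ell k \<theta> x)" U "relu (realiz ell k \<theta>' x)" c i] False R th R0 U Uj Ej D
        by simp
    qed
    moreover have "R + real (ell k) * (R * U) \<ge> 0" "1 + real (ell k) * (U + R * c) \<ge> 0"
      using R0 U by simp_all
    ultimately show ?thesis by blast
  qed
qed

lemma aux_sq: "(y::real) \<ge> 0 \<Longrightarrow> y \<le> 1 + y\<^sup>2"
proof (cases "y \<le> 1")
  case True then show ?thesis by (simp add: add_increasing2)
next
  case False
  then have "y \<le> y * y" by (simp add: mult_le_cancel_left1)
  then show ?thesis by (simp add: power2_eq_square)
qed

theorem lemma2p10:
  fixes ell :: "nat \<Rightarrow> nat" and L :: nat and a b :: real
    and M :: "(nat \<Rightarrow> real) measure" and f :: "(nat \<Rightarrow> real) \<Rightarrow> (nat \<Rightarrow> real)"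
    and K :: "(nat \<Rightarrow> real) set"
  assumes L_pos: "L \<ge> 1"
    and ell_pos: "\<And>k. ell k \<ge> 1"
    and ab: "a < b"
    and space_M: "space M = cube (ell 0) a b"
    and sets_M: "sets M = sets (restrict_space (PiM {1..ell 0} (\<lambda>_. borel)) (cube (ell 0) a b))"
    and finite_M: "emeasure M (space M) < \<infinity>"
    and f_meas: "\<And>i. i \<in> {1..ell L} \<Longrightarrow> (\<lambda>x. f x i) \<in> borel_measurable M"
    and integrable: "\<And>\<theta>. \<theta> \<in> params (dd ell L) \<Longrightarrow>
          integrable M (\<lambda>x. (vnorm (ell L) (\<lambda>i. realiz ell L \<theta> x i - f x i))\<^sup>2)"
    and K_sub: "K \<subseteq> params (dd ell L)"
    and K_compact: "compact K"
  shows "\<exists>C :: real. \<forall>\<theta>\<in>K. \<forall>\<theta>'\<in>K.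
     \<bar>loss ell L M f \<theta> - loss ell L M f \<theta>'\<bar>
     + (SUP x\<in>cube (ell 0) a b. vnorm (ell L) (\<lambda>i. realiz ell L \<theta> x i - realiz ell L \<theta>' x i))
     \<le> C * vnorm (dd ell L) (\<lambda>i. \<theta> i - \<theta>' i)"
proof -
  define d where "d = dd ell L"
  have "\<forall>m. \<exists>r. \<forall>\<theta>\<in>K. \<bar>\<theta> m\<bar> \<le> r"
  proof
    fix m
    have "compact ((\<lambda>\<theta>. \<theta> m) ` K)"
      by (rule compact_continuous_image[OF continuous_on_subset[OF continuous_on_product_coordinates] K_compact]) simp
    then have "bounded ((\<lambda>\<theta>. \<theta> m) ` K)" by (rule compact_imp_bounded)
    then show "\<exists>r. \<forall>\<theta>\<in>K. \<bar>\<theta> m\<bar> \<le> r" unfolding bounded_iff by auto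
  qed
  then obtain r where r: "\<And>m \<theta>. \<theta> \<in> K \<Longrightarrow> \<bar>\<theta> m\<bar> \<le> r m" by metis
  define R where "R = (\<Sum>m\<in>{1..d}. \<bar>r m\<bar>)"
  define K' where "K' = insert (\<lambda>_. 0) K"
  have R0: "R \<ge> 0" unfolding R_def by (simp add: sum_nonneg)
  have K': "K' \<subseteq> params d" using K_sub unfolding K'_def d_def params_def by auto
  have RK': "\<bar>\<theta> m\<bar> \<le> R" if "\<theta> \<in> K'" for \<theta> m
  proof (cases "\<theta> \<in> K")
    case True
    show ?thesis
    proof (cases "m \<in> {1..d}")
      case True
      have "\<bar>\<theta> m\<bar> \<le> \<bar>r m\<bar>" using r[OF \<open>\<theta> \<in> K\<close>, of m] by linarith
      also have "\<dots> \<le> R" unfolding R_def by (rule member_le_sum) (use True in auto)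
      finally show ?thesis .
    next
      case False
      then have "\<theta> m = 0" using K_sub \<open>\<theta> \<in> K\<close> unfolding params_def d_def by auto
      then show ?thesis using R0 by simp
    qed
  next
    case False
    then show ?thesis using that R0 unfolding K'_def by auto
  qed
  define B where "B = \<bar>a\<bar> + \<bar>b\<bar>"
  have B0: "B \<ge> 0" unfolding B_def by simp
  have cubeB: "\<forall>j\<in>{1..ell 0}. \<bar>x j\<bar> \<le> B" if "x \<in> cube (ell 0) a b" for x
    using that unfolding cube_def B_def by (auto simp: PiE_iff)
  obtain U c where U0: "U \<ge> 0" "c \<ge> 0" and UC: "\<forall>\<theta>\<in>K'. \<forall>\<theta>'\<in>K'. \<forall>x. (\<forall>j\<in>{1..ell 0}. \<bar>x j\<bar> \<le> B) \<longrightarrow>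
     (\<forall>i. \<bar>realiz ell L \<theta> x i\<bar> \<le> U \<and>
        \<bar>realiz ell L \<theta> x i - realiz ell L \<theta>' x i\<bar> \<le> c * vnorm d (\<lambda>i. \<theta> i - \<theta>' i))"
    using realiz_lip[of K' d R B L ell, OF K' _ R0 B0 L_pos] RK' by blast
  define E where "E = real (ell L) * c"
  have KK': "K \<subseteq> K'" unfolding K'_def by auto
  have zK': "(\<lambda>_. 0) \<in> K'" unfolding K'_def by auto
  have netdiff: "vnorm (ell L) (\<lambda>i. realiz ell L \<theta> x i - realiz ell L \<theta>' x i) \<le> E * vnorm d (\<lambda>i. \<theta> i - \<theta>' i)"
    if "\<theta> \<in> K" "\<theta>' \<in> K" "x \<in> cube (ell 0) a b" for \<theta> \<theta>' x
  proof -
    have "vnorm (ell L) (\<lambda>i. realiz ell L \<theta> x i - realiz ell L \<theta>' x i) \<le> real (ell L) * (c * vnorm d (\<lambda>i. \<theta> i - \<theta>' i))"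
      by (rule vnorm_le_const) (use UC that KK' cubeB in blast)
    then show ?thesis unfolding E_def by simp
  qed
  have cube_ne: "cube (ell 0) a b \<noteq> {}" unfolding cube_def using ab by (simp add: PiE_eq_empty_iff)
  have SUPb: "(SUP x\<in>cube (ell 0) a b. vnorm (ell L) (\<lambda>i. realiz ell L \<theta> x i - realiz ell L \<theta>' x i))
      \<le> E * vnorm d (\<lambda>i. \<theta> i - \<theta>' i)" if "\<theta> \<in> K" "\<theta>' \<in> K" for \<theta> \<theta>'
    by (rule cSUP_least[OF cube_ne]) (use netdiff that in blast)
  define g where "g \<theta> x = vnorm (ell L) (\<lambda>i. realiz ell L \<theta> x i - f x i)" for \<theta> x
  have g0: "g \<theta> x \<ge> 0" for \<theta> x unfolding g_def by (rule vnorm_nonneg)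
  have fm: "finite_measure M" using finite_M by (intro finite_measureI) simp
  have igK: "integrable M (\<lambda>x. (g \<theta> x)\<^sup>2)" if "\<theta> \<in> K" for \<theta>
    unfolding g_def using integrable K_sub that by blast
  have ig00: "integrable M (\<lambda>x. (g (\<lambda>_. 0) x)\<^sup>2)"
    unfolding g_def by (rule integrable) (simp add: params_def)
  have gm: "(\<lambda>x. g (\<lambda>_. 0) x) \<in> borel_measurable M"
  proof -
    have "(\<lambda>x. sqrt ((g (\<lambda>_. 0) x)\<^sup>2)) \<in> borel_measurable M"
      using borel_measurable_integrable[OF ig00] by measurable
    then show ?thesis using g0 by simp
  qed
  define h where "h x = 2 * real (ell L) * U + g (\<lambda>_. 0) x" for x
  have ig0: "integrable M (\<lambda>x. g (\<lambda>_. 0) x)"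
  proof (rule Bochner_Integration.integrable_bound[OF _ gm])
    show "integrable M (\<lambda>x. 1 + (g (\<lambda>_. 0) x)\<^sup>2)"
      by (rule Bochner_Integration.integrable_add[OF finite_measure.integrable_const[OF fm] ig00])
    show "AE x in M. norm (g (\<lambda>_. 0) x) \<le> norm (1 + (g (\<lambda>_. 0) x)\<^sup>2)"
    proof (rule AE_I2)
      fix x
      have "g (\<lambda>_. 0) x \<le> 1 + (g (\<lambda>_. 0) x)\<^sup>2"
        by (rule aux_sq[OF g0])
      then show "norm (g (\<lambda>_. 0) x) \<le> norm (1 + (g (\<lambda>_. 0) x)\<^sup>2)" using g0[of "\<lambda>_. 0" x] by simp
    qed
  qed
  have ih: "integrable M h" unfolding h_def by (rule Bochner_Integration.integrable_add[OF finite_measure.integrable_const[OF fm] ig0])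
  have gh: "g \<theta> x \<le> h x" if "\<theta> \<in> K" "x \<in> cube (ell 0) a b" for \<theta> x
  proof -
    have "g \<theta> x = vnorm (ell L) (\<lambda>i. (realiz ell L \<theta> x i - realiz ell L (\<lambda>_. 0) x i) + (realiz ell L (\<lambda>_. 0) x i - f x i))"
      unfolding g_def by simp
    also have "\<dots> \<le> vnorm (ell L) (\<lambda>i. realiz ell L \<theta> x i - realiz ell L (\<lambda>_. 0) x i) + g (\<lambda>_. 0) x"
      unfolding g_def by (rule vnorm_triangle)
    also have "vnorm (ell L) (\<lambda>i. realiz ell L \<theta> x i - realiz ell L (\<lambda>_. 0) x i) \<le> real (ell L) * (2 * U)"
    proof (rule vnorm_le_const)
      fix i
      have "\<bar>realiz ell L \<theta> x i\<bar> \<le> U" "\<bar>realiz ell L (\<lambda>_. 0) x i\<bar> \<le> U"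
        using UC that KK' zK' cubeB by blast+
      then show "\<bar>realiz ell L \<theta> x i - realiz ell L (\<lambda>_. 0) x i\<bar> \<le> 2 * U" by linarith
    qed
    finally show ?thesis unfolding h_def by simp
  qed
  define I where "I = integral\<^sup>L M h"
  have lossb: "\<bar>loss ell L M f \<theta> - loss ell L M f \<theta>'\<bar> \<le> E * vnorm d (\<lambda>i. \<theta> i - \<theta>' i) * 2 * I"
    if th: "\<theta> \<in> K" "\<theta>' \<in> K" for \<theta> \<theta>'
  proof -
    let ?\<delta> = "vnorm d (\<lambda>i. \<theta> i - \<theta>' i)"
    have "loss ell L M f \<theta> - loss ell L M f \<theta>' = (\<integral>x. (g \<theta> x)\<^sup>2 - (g \<theta>' x)\<^sup>2 \<partial>M)"
      unfolding loss_def g_def[symmetric] using igK th by (simp add: Bochner_Integration.integral_diff)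
    also have "\<bar>\<dots>\<bar> \<le> (\<integral>x. \<bar>(g \<theta> x)\<^sup>2 - (g \<theta>' x)\<^sup>2\<bar> \<partial>M)" by (rule integral_abs_bound)
    also have "\<dots> \<le> (\<integral>x. E * ?\<delta> * 2 * h x \<partial>M)"
    proof (rule integral_mono)
      show "integrable M (\<lambda>x. \<bar>(g \<theta> x)\<^sup>2 - (g \<theta>' x)\<^sup>2\<bar>)" by (intro integrable_abs Bochner_Integration.integrable_diff igK th)
      show "integrable M (\<lambda>x. E * ?\<delta> * 2 * h x)" using ih by (rule integrable_mult_right)
      fix x assume x: "x \<in> space M"
      then have xc: "x \<in> cube (ell 0) a b" using space_M by simp
      have "\<bar>g \<theta> x - g \<theta>' x\<bar> \<le> vnorm (ell L) (\<lambda>i. (realiz ell L \<theta> x i - f x i) - (realiz ell L \<theta>' x i - f x i))"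
        unfolding g_def by (rule vnorm_rev_triangle)
      also have "\<dots> \<le> E * ?\<delta>" using netdiff[OF th xc] by simp
      finally have 1: "\<bar>g \<theta> x - g \<theta>' x\<bar> \<le> E * ?\<delta>" .
      have 2: "g \<theta> x + g \<theta>' x \<le> 2 * h x" using gh[OF th(1) xc] gh[OF th(2) xc] by simp
      have "\<bar>(g \<theta> x)\<^sup>2 - (g \<theta>' x)\<^sup>2\<bar> = \<bar>g \<theta> x - g \<theta>' x\<bar> * (g \<theta> x + g \<theta>' x)"
      proof -
        have "(g \<theta> x)\<^sup>2 - (g \<theta>' x)\<^sup>2 = (g \<theta> x - g \<theta>' x) * (g \<theta> x + g \<theta>' x)"
          by (simp add: power2_eq_square algebra_simps)
        then show ?thesis using g0[of \<theta> x] g0[of \<theta>' x] by (simp only: abs_mult)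
      qed
      also have "\<dots> \<le> (E * ?\<delta>) * (2 * h x)"
        by (rule mult_mono[OF 1 2]) (use g0[of \<theta> x] g0[of \<theta>' x] 1 in auto)
      finally show "\<bar>(g \<theta> x)\<^sup>2 - (g \<theta>' x)\<^sup>2\<bar> \<le> E * ?\<delta> * 2 * h x" by simp
    qed
    also have "\<dots> = E * ?\<delta> * 2 * I" unfolding I_def by simp
    finally show ?thesis .
  qed
  show ?thesis
  proof (intro exI[of _ "E * 2 * I + E"] ballI)
    fix \<theta> \<theta>' assume th: "\<theta> \<in> K" "\<theta>' \<in> K"
    show "\<bar>loss ell L M f \<theta> - loss ell L M f \<theta>'\<bar>
     + (SUP x\<in>cube (ell 0) a b. vnorm (ell L) (\<lambda>i. realiz ell L \<theta> x i - realiz ell L \<theta>' x i))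
     \<le> (E * 2 * I + E) * vnorm (dd ell L) (\<lambda>i. \<theta> i - \<theta>' i)"
      using lossb[OF th] SUPb[OF th] unfolding d_def by (simp add: algebra_simps)
  qed
qed

end
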